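(* Let $\mathcal{H}$ be a complex Hilbert space and $B,C\in\mathcal{B}(\mathcal{H})$. Then $$w^2\left(\begin{bmatrix}0 & B\\ C & 0\end{bmatrix}\right)\ge \frac14\max\left\{\big\||B|^2+|C^*|^2\big\|,\ \big\||B^*|^2+|C|^2\big\|\right\}+\frac18\Big|\,\|B+C^*\|^2-\|B-C^*\|^2\,\Big|.$$
   Context: $\mathcal{B}(\mathcal{H})$ is the algebra of bounded linear operators on $\mathcal{H}$ with operator norm $\|\cdot\|$. For $A\in\mathcal{B}(\mathcal{H})$, $A^*$ is the adjoint, $|A|=(A^*A)^{1/2}$, $|A^*|=(AA^* )^{1/2}$, and $w(A)=\sup_{\|x\|=1}|\langle Ax,x\rangle|$ is the numerical radius. The operator matrix $\begin{bmatrix}A&B\\C&D\end{bmatrix}$ acts on $\mathcal{H}\oplus\mathcal{H}$ by $(x_1,x_2)\mapsto(Ax_1+Bx_2,\,Cx_1+Dx_2)$; $0$ denotes the zero operator. *)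

theory Defs
  imports "HOL-Analysis.Analysis"
begin

class chilbert_space = banach +
  fixes scaleC :: "complex \<Rightarrow> 'a \<Rightarrow> 'a"
    and cinner :: "'a \<Rightarrow> 'a \<Rightarrow> complex"
  assumes scaleC_add_right: "scaleC a (x + y) = scaleC a x + scaleC a y"
    and scaleC_add_left: "scaleC (a + b) x = scaleC a x + scaleC b x"
    and scaleC_scaleC: "scaleC a (scaleC b x) = scaleC (a * b) x"
    and scaleC_of_real: "scaleC (complex_of_real r) x = r *\<^sub>R x"
    and cinner_add_left: "cinner (x + y) z = cinner x z + cinner y z"
    and cinner_scaleC_left: "cinner (scaleC a x) y = a * cinner x y"
    and cinner_commute: "cinner x y = cnj (cinner y x)"
    and norm_cinner: "norm x = sqrt (Re (cinner x x))"

definition bop :: "('a::chilbert_space \<Rightarrow> 'a) \<Rightarrow> bool" where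
  "bop T \<longleftrightarrow> bounded_linear T \<and> (\<forall>c x. T (scaleC c x) = scaleC c (T x))"

definition cadj :: "('a::chilbert_space \<Rightarrow> 'a) \<Rightarrow> ('a \<Rightarrow> 'a)" where
  "cadj T = (THE S. \<forall>x y. cinner (T x) y = cinner x (S y))"

definition opmat :: "('a::chilbert_space \<Rightarrow> 'a) \<Rightarrow> ('a \<Rightarrow> 'a) \<Rightarrow> ('a \<Rightarrow> 'a) \<Rightarrow> ('a \<Rightarrow> 'a)
     \<Rightarrow> ('a \<times> 'a \<Rightarrow> 'a \<times> 'a)" where
  "opmat A B C D = (\<lambda>(x1, x2). (A x1 + B x2, C x1 + D x2))"

text \<open>Inner product on H \<oplus> H; its induced norm is the product norm of 'a \<times> 'a.\<close>
definition dsinner :: "'a::chilbert_space \<times> 'a \<Rightarrow> 'a \<times> 'a \<Rightarrow> complex" where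
  "dsinner z u = cinner (fst z) (fst u) + cinner (snd z) (snd u)"

text \<open>Numerical radius of an operator on H \<oplus> H (sup over the closed unit ball,
which equals the sup over the unit sphere when H is nontrivial).\<close>
definition nrad2 :: "('a::chilbert_space \<times> 'a \<Rightarrow> 'a \<times> 'a) \<Rightarrow> real" where
  "nrad2 T = Sup {cmod (dsinner (T z) z) | z. norm z \<le> 1}"

end

theory Submission
  imports Defs
begin



lemma cinner_zero_left[simp]: "cinner 0 y = 0"
  using cinner_add_left[of 0 0 y] by simp

lemma cinner_minus_left[simp]: "cinner (- x) y = - cinner x y"
proof -
  have "cinner x y + cinner (- x) y = 0" using cinner_add_left[of x "-x" y] by simp
  thus ?thesis by (simp add: add_eq_0_iff)
qed

lemma cinner_diff_left: "cinner (x - y) z = cinner x z - cinner y z"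
  using cinner_add_left[of x "-y" z] by simp

lemma cinner_add_right: "cinner x (y + z) = cinner x y + cinner x z"
  by (metis cinner_add_left cinner_commute complex_cnj_add)

lemma cinner_zero_right[simp]: "cinner x 0 = 0"
  by (metis cinner_commute cinner_zero_left complex_cnj_zero)

lemma cinner_minus_right[simp]: "cinner x (- y) = - cinner x y"
  by (metis cinner_commute cinner_minus_left complex_cnj_minus)

lemma cinner_diff_right: "cinner x (y - z) = cinner x y - cinner x z"
  using cinner_add_right[of x y "-z"] by simp

lemma cinner_scaleC_right: "cinner x (scaleC a y) = cnj a * cinner x y"
  by (metis cinner_commute cinner_scaleC_left complex_cnj_cnj complex_cnj_mult)

lemma cinner_scaleR_left: "cinner (r *\<^sub>R x) y = of_real r * cinner x y"
  by (metis cinner_scaleC_left scaleC_of_real)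

lemma cinner_scaleR_right: "cinner x (r *\<^sub>R y) = of_real r * cinner x y"
  by (metis cinner_scaleC_right scaleC_of_real complex_cnj_complex_of_real)

lemma Im_cinner_self[simp]: "Im (cinner x x) = 0"
  using arg_cong[OF cinner_commute[of x x], of Im] by simp

lemma Re_cinner_self: "Re (cinner x x) = (norm x)^2"
proof -
  have "norm x \<ge> 0" by simp
  hence "Re (cinner x x) \<ge> 0" using norm_cinner[of x] by (simp add: real_sqrt_ge_0_iff)
  thus ?thesis using norm_cinner[of x] by simp
qed

lemma cinner_self: "cinner x x = of_real ((norm x)^2)"
  by (simp add: complex_eq_iff Re_cinner_self)

lemma Re_cinner_commute: "Re (cinner x y) = Re (cinner y x)"
  using arg_cong[OF cinner_commute[of x y], of Re] by simp

lemma norm_add_sq: "(norm (x + (y::'a::chilbert_space)))^2 = (norm x)^2 + (norm y)^2 + 2 * Re (cinner x y)"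
proof -
  have "(norm (x + y))^2 = Re (cinner (x+y) (x+y))" by (simp add: Re_cinner_self)
  also have "\<dots> = Re (cinner x x) + Re (cinner y y) + Re (cinner x y) + Re (cinner y x)"
    by (simp add: cinner_add_left cinner_add_right)
  finally show ?thesis by (simp add: Re_cinner_self Re_cinner_commute[of y x])
qed

lemma norm_diff_sq: "(norm (x - (y::'a::chilbert_space)))^2 = (norm x)^2 + (norm y)^2 - 2 * Re (cinner x y)"
  using norm_add_sq[of x "-y"] by simp

lemma Re_cinner_le: "Re (cinner x y) \<le> norm x * norm y"
proof -
  have "norm (x + y) \<le> norm x + norm y" by (rule norm_triangle_ineq)
  hence "(norm (x + y))^2 \<le> (norm x + norm y)^2"
    by (simp add: power_mono)
  thus ?thesis unfolding norm_add_sq by (simp add: power2_eq_square algebra_simps)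
qed

lemma norm_scaleC: "norm (scaleC a x) = cmod a * norm x"
proof -
  have "(norm (scaleC a x))^2 = Re (cinner (scaleC a x) (scaleC a x))" by (simp add: Re_cinner_self)
  also have "\<dots> = Re (a * cnj a * cinner x x)"
    by (simp add: cinner_scaleC_left cinner_scaleC_right mult.assoc)
  also have "a * cnj a = of_real ((cmod a)^2)" by (simp add: complex_norm_square[symmetric])
  also have "Re (of_real ((cmod a)^2) * cinner x x) = (cmod a * norm x)^2"
    by (simp add: Re_cinner_self power_mult_distrib)
  finally show ?thesis by (simp add: power2_eq_iff_nonneg)
qed

lemma cinner_le: "cmod (cinner x y) \<le> norm x * norm y"
proof (cases "cinner x y = 0")
  case True thus ?thesis by simp
next
  case False
  define c where "c = cnj (cinner x y) / of_real (cmod (cinner x y))"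
  have cm: "cmod c = 1" using False by (simp add: c_def norm_divide)
  have "c * cinner x y = of_real (cmod (cinner x y))"
    using False unfolding c_def
    by (simp add: field_simps mult.commute complex_norm_square[symmetric] power2_eq_square)
  hence "cmod (cinner x y) = Re (cinner (scaleC c x) y)" by (simp add: cinner_scaleC_left)
  also have "\<dots> \<le> norm (scaleC c x) * norm y" by (rule Re_cinner_le)
  finally show ?thesis by (simp add: norm_scaleC cm)
qed

lemma cinner_eq_zero_iff: "cinner x x = 0 \<longleftrightarrow> x = 0"
  by (simp add: cinner_self)

lemma cinner_ext: "(\<And>z. cinner z a = cinner z b) \<Longrightarrow> a = b"
proof -
  assume h: "\<And>z. cinner z a = cinner z b"
  have "cinner (a - b) (a - b) = 0" using h[of "a-b"] by (simp add: cinner_diff_right)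
  thus ?thesis by (simp add: cinner_eq_zero_iff)
qed

lemma parallelogram: "(norm (x + (y::'a::chilbert_space)))^2 + (norm (x - y))^2 = 2 * (norm x)^2 + 2 * (norm y)^2"
  by (simp add: norm_add_sq norm_diff_sq)



lemma riesz:
  fixes \<phi> :: "'a::chilbert_space \<Rightarrow> complex"
  assumes add: "\<And>x y. \<phi> (x+y) = \<phi> x + \<phi> y"
    and sc: "\<And>c x. \<phi> (scaleC c x) = c * \<phi> x"
    and bnd: "\<And>x. cmod (\<phi> x) \<le> M * norm x"
  shows "\<exists>w. \<forall>x. \<phi> x = cinner x w"
proof -
  have scR: "\<phi> (r *\<^sub>R x) = r *\<^sub>R \<phi> x" for r x
    using sc[of "of_real r" x] by (simp add: scaleC_of_real scaleR_conv_of_real)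
  have bl: "bounded_linear \<phi>"
    by (rule bounded_linear_intro[where K=M]) (auto simp: add scR bnd mult.commute)
  interpret phi: bounded_linear \<phi> by (rule bl)
  show ?thesis
  proof (cases "\<forall>x. \<phi> x = 0")
    case True
    thus ?thesis by (intro exI[of _ 0]) simp
  next
    case False
    then obtain v where v: "\<phi> v \<noteq> 0" by blast
    define S where "S = {(norm (v - k))^2 | k. \<phi> k = 0}"
    define d2 where "d2 = Inf S"
    have Sne: "S \<noteq> {}" unfolding S_def using phi.zero by blast
    have Sbdd: "bdd_below S" unfolding S_def by (rule bdd_belowI[of _ 0]) auto
    have d2le: "d2 \<le> (norm (v - k))^2" if "\<phi> k = 0" for k
      unfolding d2_def by (rule cInf_lower[OF _ Sbdd]) (use that S_def in blast)
    have "\<exists>k. \<phi> k = 0 \<and> (norm (v - k))^2 < d2 + inverse (real (Suc n))" for n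
    proof -
      have "Inf S < d2 + inverse (real (Suc n))" unfolding d2_def by simp
      from cInf_lessD[OF Sne this] show ?thesis unfolding S_def by blast
    qed
    then obtain ks where ks0: "\<And>n. \<phi> (ks n) = 0"
      and ks1: "\<And>n. (norm (v - ks n))^2 < d2 + inverse (real (Suc n))"
      by metis
    have key: "(norm (ks m - ks n))^2 \<le> 2 * inverse (real (Suc m)) + 2 * inverse (real (Suc n))" for m n
    proof -
      define mid where "mid = (1/2) *\<^sub>R (ks m + ks n)"
      have "\<phi> mid = 0" by (simp add: mid_def scR phi.add ks0)
      hence "d2 \<le> (norm (v - mid))^2" by (rule d2le)
      have e: "(v - ks m) + (v - ks n) = 2 *\<^sub>R (v - mid)"
        by (simp add: mid_def algebra_simps scaleR_2)
      have "(norm ((v - ks m) + (v - ks n)))^2 = 4 * (norm (v - mid))^2"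
        unfolding e by (simp add: power_mult_distrib)
      moreover have "(v - ks m) - (v - ks n) = ks n - ks m" by simp
      moreover have "norm (ks m - ks n) = norm (ks n - ks m)" by (rule norm_minus_commute)
      ultimately show ?thesis
        using parallelogram[of "v - ks m" "v - ks n"] ks1[of m] ks1[of n] \<open>d2 \<le> _\<close> by simp
    qed
    have "Cauchy ks"
    proof (rule metric_CauchyI)
      fix e :: real assume e: "e > 0"
      obtain M where M: "inverse (real (Suc M)) < e^2 / 4"
        using e by (metis reals_Archimedean zero_less_divide_iff zero_less_numeral zero_less_power)
      show "\<exists>M. \<forall>m\<ge>M. \<forall>n\<ge>M. dist (ks m) (ks n) < e"
      proof (intro exI allI impI)
        fix m n assume mn: "m \<ge> M" "n \<ge> M"
        have i: "inverse (real (Suc m)) \<le> inverse (real (Suc M))" "inverse (real (Suc n)) \<le> inverse (real (Suc M))"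
          using mn by (auto simp: field_simps)
        have "(norm (ks m - ks n))^2 < e^2"
          using key[of m n] M i by linarith
        hence "(dist (ks m) (ks n))^2 < e^2" by (simp add: dist_norm)
        thus "dist (ks m) (ks n) < e" using e by (simp add: power_less_imp_less_base)
      qed
    qed
    hence "convergent ks" by (rule Cauchy_convergent)
    then obtain p where kp: "ks \<longlonglongrightarrow> p" by (auto simp: convergent_def)
    have "(\<lambda>n. \<phi> (ks n)) \<longlonglongrightarrow> \<phi> p" by (rule phi.tendsto[OF kp])
    hence "(\<lambda>n. 0) \<longlonglongrightarrow> \<phi> p" by (simp add: ks0)
    hence p0: "\<phi> p = 0" using LIMSEQ_unique tendsto_const by blast
    have "(\<lambda>n. (norm (v - ks n))^2) \<longlonglongrightarrow> (norm (v - p))^2"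
      by (intro tendsto_intros kp)
    moreover have "(\<lambda>n. d2 + inverse (real (Suc n))) \<longlonglongrightarrow> d2 + 0"
      by (intro tendsto_intros LIMSEQ_inverse_real_of_nat)
    ultimately have vp: "(norm (v - p))^2 \<le> d2"
      using ks1 by (intro LIMSEQ_le[where X="\<lambda>n. (norm (v - ks n))^2"]) (auto intro: less_imp_le)
    define u where "u = v - p"
    have minu: "(norm u)^2 \<le> (norm (u - k))^2" if "\<phi> k = 0" for k
    proof -
      have "\<phi> (p + k) = 0" using that p0 by (simp add: phi.add)
      hence "d2 \<le> (norm (v - (p + k)))^2" by (rule d2le)
      moreover have "u - k = v - (p + k)" by (simp add: u_def algebra_simps)
      ultimately show ?thesis using vp unfolding u_def by (metis order_trans)
    qed
    have orth: "cinner k u = 0" if k: "\<phi> k = 0" for k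
    proof -
      define a where "a = cinner u k"
      define \<epsilon> where "\<epsilon> = 1 / ((norm k)^2 + 1)"
      have ep: "\<epsilon> > 0" unfolding \<epsilon>_def by (simp add: add_nonneg_pos)
      have "0 < (norm k)^2 + 1" by (simp add: add_nonneg_pos)
      hence ep1: "\<epsilon> * (norm k)^2 < 1" by (simp add: \<epsilon>_def divide_less_eq)
      define t where "t = of_real \<epsilon> * a"
      have "\<phi> (scaleC t k) = 0" by (simp add: sc k)
      hence "(norm u)^2 \<le> (norm (u - scaleC t k))^2" by (rule minu)
      also have "\<dots> = (norm u)^2 + (cmod t * norm k)^2 - 2 * Re (cnj t * a)"
        by (simp add: norm_diff_sq norm_scaleC cinner_scaleC_right a_def)
      also have "cnj t * a = of_real (\<epsilon> * (cmod a)^2)"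
        by (simp add: t_def complex_norm_square[symmetric] mult.assoc mult.commute)
      also have "cmod t = \<epsilon> * cmod a" using ep by (simp add: t_def norm_mult)
      finally have "2 * (\<epsilon> * (cmod a)^2) \<le> (\<epsilon> * cmod a * norm k)^2" by simp
      hence "\<epsilon> * (2 * (cmod a)^2) \<le> \<epsilon> * ((cmod a)^2 * (\<epsilon> * (norm k)^2))"
        by (simp add: power_mult_distrib power2_eq_square algebra_simps)
      hence "2 * (cmod a)^2 \<le> (cmod a)^2 * (\<epsilon> * (norm k)^2)" using ep by simp
      also have "\<dots> \<le> (cmod a)^2 * 1" using ep1 by (intro mult_left_mono) auto
      finally have "a = 0" by simp
      thus ?thesis by (metis a_def cinner_commute complex_cnj_zero)
    qed
    have pu: "\<phi> u = \<phi> v" by (simp add: u_def phi.diff p0)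
    hence u0: "u \<noteq> 0" using v by auto
    define w where "w = scaleC (cnj (\<phi> u) / of_real ((norm u)^2)) u"
    show ?thesis
    proof (intro exI allI)
      fix x
      define k where "k = x - scaleC (\<phi> x / \<phi> u) u"
      have "\<phi> k = 0" using pu v by (simp add: k_def phi.diff sc)
      hence "cinner k u = 0" by (rule orth)
      hence "cinner x u = (\<phi> x / \<phi> u) * of_real ((norm u)^2)"
        by (simp add: k_def cinner_diff_left cinner_scaleC_left cinner_self)
      thus "\<phi> x = cinner x w" using pu v u0
        by (simp add: w_def cinner_scaleC_right)
    qed
  qed
qed



lemma bop_bl: "bop T \<Longrightarrow> bounded_linear T" by (simp add: bop_def)
lemma bop_sc: "bop T \<Longrightarrow> T (scaleC c x) = scaleC c (T x)" by (simp add: bop_def)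

lemma adj_exists:
  fixes T :: "'a::chilbert_space \<Rightarrow> 'a"
  assumes "bop T"
  shows "\<exists>S. \<forall>x y. cinner (T x) y = cinner x (S y)"
proof -
  interpret t: bounded_linear T by (rule bop_bl[OF assms])
  have "\<exists>w. \<forall>x. cinner (T x) y = cinner x w" for y
  proof (rule riesz[where M="onorm T * norm y"])
    show "cinner (T (x + z)) y = cinner (T x) y + cinner (T z) y" for x z
      by (simp add: t.add cinner_add_left)
    show "cinner (T (scaleC c x)) y = c * cinner (T x) y" for c x
      by (simp add: bop_sc[OF assms] cinner_scaleC_left)
    show "cmod (cinner (T x) y) \<le> onorm T * norm y * norm x" for x
    proof -
      have "cmod (cinner (T x) y) \<le> norm (T x) * norm y" by (rule cinner_le)
      also have "\<dots> \<le> onorm T * norm x * norm y"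
        by (intro mult_right_mono onorm[OF bop_bl[OF assms]]) auto
      finally show ?thesis by (simp add: algebra_simps)
    qed
  qed
  thus ?thesis by metis
qed

lemma cadj_prop:
  fixes T :: "'a::chilbert_space \<Rightarrow> 'a"
  assumes "bop T"
  shows "cinner (T x) y = cinner x (cadj T y)"
proof -
  obtain S where S: "\<forall>x y. cinner (T x) y = cinner x (S y)" using adj_exists[OF assms] by blast
  have "\<forall>x y. cinner (T x) y = cinner x (cadj T y)"
    unfolding cadj_def
  proof (rule theI[where a=S])
    show "\<forall>x y. cinner (T x) y = cinner x (S y)" by (rule S)
    fix S' assume "\<forall>x y. cinner (T x) y = cinner x (S' y)"
    hence "S' y = S y" for y using S by (intro cinner_ext) metis
    thus "S' = S" by blast
  qed
  thus ?thesis by blast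
qed

lemma cadj_prop2:
  fixes T :: "'a::chilbert_space \<Rightarrow> 'a"
  assumes "bop T"
  shows "cinner (cadj T y) x = cinner y (T x)"
  by (metis cadj_prop[OF assms] cinner_commute)

lemma cadj_bl:
  fixes T :: "'a::chilbert_space \<Rightarrow> 'a"
  assumes "bop T"
  shows "bounded_linear (cadj T)"
proof (rule bounded_linear_intro[where K="onorm T"])
  show "cadj T (x + y) = cadj T x + cadj T y" for x y
    by (rule cinner_ext) (simp add: cadj_prop[OF assms, symmetric] cinner_add_right)
  show "cadj T (r *\<^sub>R x) = r *\<^sub>R cadj T x" for r x
    by (rule cinner_ext) (simp add: cadj_prop[OF assms, symmetric] cinner_scaleR_right)
  show "norm (cadj T x) \<le> norm x * onorm T" for x
  proof -
    let ?y = "cadj T x"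
    have "(norm ?y)^2 = Re (cinner (T ?y) x)" by (simp add: cadj_prop[OF assms] Re_cinner_self)
    also have "\<dots> \<le> norm (T ?y) * norm x" by (rule Re_cinner_le)
    also have "\<dots> \<le> onorm T * norm ?y * norm x"
      by (intro mult_right_mono onorm[OF bop_bl[OF assms]]) auto
    finally have h: "norm ?y * norm ?y \<le> norm ?y * (norm x * onorm T)"
      by (simp add: power2_eq_square algebra_simps)
    show ?thesis
    proof (cases "norm ?y = 0")
      case True thus ?thesis using onorm_pos_le[OF bop_bl[OF assms]] by simp
    next
      case False thus ?thesis using h by (simp add: mult_le_cancel_left)
    qed
  qed
qed

lemma sq_sum_bound:
  fixes F G :: "'a::chilbert_space \<Rightarrow> 'a"
  assumes "norm (F u + G u) \<le> s * norm u" "norm (F u - G u) \<le> d * norm u"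
    and "0 \<le> norm (F u + G u)" "0 \<le> norm (F u - G u)"
  shows "(norm (F u))^2 + (norm (G u))^2 \<le> (s^2 + d^2)/2 * (norm u)^2"
proof -
  have "(norm (F u + G u))^2 \<le> (s * norm u)^2" by (rule power_mono[OF assms(1)]) simp
  moreover have "(norm (F u - G u))^2 \<le> (d * norm u)^2" by (rule power_mono[OF assms(2)]) simp
  ultimately show ?thesis using parallelogram[of "F u" "G u"]
    by (simp add: power_mult_distrib field_simps)
qed

lemma real_cs: "(a*b + c*e::real)^2 \<le> (a^2+c^2)*(b^2+e^2)"
proof -
  have "(a^2+c^2)*(b^2+e^2) - (a*b + c*e)^2 = (a*e - c*b)^2" by (simp add: power2_eq_square algebra_simps)
  thus ?thesis by (metis diff_ge_0_iff_ge zero_le_power2)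
qed

lemma comp_bound:
  fixes F G F' G' :: "'a::chilbert_space \<Rightarrow> 'a"
  assumes F: "\<And>u z. cinner (F' u) z = cinner u (F z)"
    and G: "\<And>u z. cinner (G' u) z = cinner u (G z)"
    and K: "\<And>u. (norm (F u))^2 + (norm (G u))^2 \<le> K * (norm u)^2" and K0: "0 \<le> K"
  shows "norm (F' (F x) + G' (G x)) \<le> K * norm x"
proof -
  let ?P = "F' (F x) + G' (G x)"
  have "(norm ?P)^2 = Re (cinner (F' (F x)) ?P) + Re (cinner (G' (G x)) ?P)"
    by (simp add: Re_cinner_self[symmetric] cinner_add_left)
  also have "\<dots> = Re (cinner (F x) (F ?P)) + Re (cinner (G x) (G ?P))" by (simp add: F G)
  also have "\<dots> \<le> norm (F x) * norm (F ?P) + norm (G x) * norm (G ?P)"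
    by (intro add_mono Re_cinner_le)
  also have "\<dots> \<le> K * norm x * norm ?P"
  proof -
    have "(norm (F x) * norm (F ?P) + norm (G x) * norm (G ?P))^2
        \<le> ((norm (F x))^2 + (norm (G x))^2) * ((norm (F ?P))^2 + (norm (G ?P))^2)"
      by (rule real_cs)
    also have "\<dots> \<le> (K * (norm x)^2) * (K * (norm ?P)^2)"
      by (intro mult_mono K) (use K0 in auto)
    also have "\<dots> = (K * norm x * norm ?P)^2" by (simp add: power2_eq_square)
    finally show ?thesis by (rule power2_le_imp_le) (simp add: K0)
  qed
  finally have h: "norm ?P * norm ?P \<le> norm ?P * (K * norm x)" by (simp add: power2_eq_square algebra_simps)
  show ?thesis
  proof (cases "norm ?P = 0")
    case True thus ?thesis using K0 by simp
  next
    case False thus ?thesis using h by (simp add: mult_le_cancel_left)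
  qed
qed

lemma adj_sum_bound:
  fixes F G F' G' :: "'a::chilbert_space \<Rightarrow> 'a"
  assumes F: "\<And>u z. cinner (F u) z = cinner u (F' z)"
    and G: "\<And>u z. cinner (G u) z = cinner u (G' z)"
    and S: "\<And>z. norm (F' z + G' z) \<le> s * norm z" and D: "\<And>z. norm (F' z - G' z) \<le> d * norm z"
    and s0: "0 \<le> s" and d0: "0 \<le> d"
  shows "norm (F u + G u) \<le> s * norm u" "norm (F u - G u) \<le> d * norm u"
proof -
  let ?w = "F u + G u"
  have "cinner ?w ?w = cinner (F u) ?w + cinner (G u) ?w" by (rule cinner_add_left)
  also have "\<dots> = cinner u (F' ?w) + cinner u (G' ?w)" by (simp only: F G)
  also have "\<dots> = cinner u (F' ?w + G' ?w)" by (rule cinner_add_right[symmetric])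
  finally have "(norm ?w)^2 = Re (cinner u (F' ?w + G' ?w))"
    by (simp add: Re_cinner_self[symmetric])
  also have "\<dots> \<le> norm u * norm (F' ?w + G' ?w)" by (rule Re_cinner_le)
  also have "\<dots> \<le> norm u * (s * norm ?w)" by (intro mult_left_mono S) auto
  finally have h: "norm ?w * norm ?w \<le> norm ?w * (s * norm u)" by (simp add: power2_eq_square algebra_simps)
  show "norm ?w \<le> s * norm u"
  proof (cases "norm ?w = 0")
    case True thus ?thesis using s0 by simp
  next
    case False thus ?thesis using h by (simp add: mult_le_cancel_left)
  qed
next
  let ?w = "F u - G u"
  have "cinner ?w ?w = cinner (F u) ?w - cinner (G u) ?w" by (rule cinner_diff_left)
  also have "\<dots> = cinner u (F' ?w) - cinner u (G' ?w)" by (simp only: F G)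
  also have "\<dots> = cinner u (F' ?w - G' ?w)" by (rule cinner_diff_right[symmetric])
  finally have "(norm ?w)^2 = Re (cinner u (F' ?w - G' ?w))"
    by (simp add: Re_cinner_self[symmetric])
  also have "\<dots> \<le> norm u * norm (F' ?w - G' ?w)" by (rule Re_cinner_le)
  also have "\<dots> \<le> norm u * (d * norm ?w)" by (intro mult_left_mono D) auto
  finally have h: "norm ?w * norm ?w \<le> norm ?w * (d * norm u)" by (simp add: power2_eq_square algebra_simps)
  show "norm ?w \<le> d * norm u"
  proof (cases "norm ?w = 0")
    case True thus ?thesis using d0 by simp
  next
    case False thus ?thesis using h by (simp add: mult_le_cancel_left)
  qed
qed



lemma final_arith:
  fixes p q s2 d2 n :: real
  assumes "p \<le> (s2+d2)/2" "q \<le> (s2+d2)/2" "s2 \<le> 4*n" "d2 \<le> 4*n"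
  shows "1/4 * max p q + 1/8 * \<bar>s2 - d2\<bar> \<le> n"
proof -
  have h1: "max p q \<le> (s2+d2)/2" using assms by simp
  have h2: "\<bar>s2 - d2\<bar> \<le> 8*n - (s2 + d2)" using assms by (simp add: abs_le_iff)
  have g: "m \<le> (s2+d2)/2 \<Longrightarrow> a \<le> 8*n - (s2 + d2) \<Longrightarrow> 1/4 * m + 1/8 * a \<le> n" for m a :: real
    by (simp add: field_simps)
  show ?thesis by (rule g[OF h1 h2])
qed

theorem mainTheorem4:
  fixes B C :: "'a::chilbert_space \<Rightarrow> 'a"
  assumes "bop B" and "bop C"
  shows "(nrad2 (opmat (\<lambda>x. 0) B C (\<lambda>x. 0)))\<^sup>2 \<ge>
     1/4 * max (onorm (\<lambda>x. cadj B (B x) + C (cadj C x)))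
               (onorm (\<lambda>x. B (cadj B x) + cadj C (C x)))
     + 1/8 * \<bar>(onorm (\<lambda>x. B x + cadj C x))\<^sup>2 - (onorm (\<lambda>x. B x - cadj C x))\<^sup>2\<bar>"
proof -
  define A where "A = cadj B"
  define D where "D = cadj C"
  define T where "T = opmat (\<lambda>x. 0) B C (\<lambda>x. 0)"
  define N where "N = nrad2 T"
  define s where "s = onorm (\<lambda>x. B x + D x)"
  define d where "d = onorm (\<lambda>x. B x - D x)"
  define K where "K = (s^2 + d^2) / 2"
  have blB: "bounded_linear B" and blC: "bounded_linear C" using assms by (simp_all add: bop_bl)
  have blD: "bounded_linear D" unfolding D_def by (rule cadj_bl[OF assms(2)])
  have blA: "bounded_linear A" unfolding A_def by (rule cadj_bl[OF assms(1)])
  interpret b: bounded_linear B by (rule blB)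
  interpret c: bounded_linear C by (rule blC)
  interpret dd: bounded_linear D by (rule blD)
  have blS: "bounded_linear (\<lambda>x. B x + D x)" by (intro bounded_linear_add blB blD)
  have blM: "bounded_linear (\<lambda>x. B x - D x)" by (intro bounded_linear_sub blB blD)
  have s0: "0 \<le> s" unfolding s_def by (rule onorm_pos_le[OF blS])
  have d0: "0 \<le> d" unfolding d_def by (rule onorm_pos_le[OF blM])
  have K0: "0 \<le> K" unfolding K_def by simp
  have sB: "norm (B z + D z) \<le> s * norm z" for z unfolding s_def by (rule onorm[OF blS])
  have dB: "norm (B z - D z) \<le> d * norm z" for z unfolding d_def by (rule onorm[OF blM])
  have aB1: "cinner (B u) z = cinner u (A z)" for u z unfolding A_def by (rule cadj_prop[OF assms(1)])
  have aB2: "cinner (A u) z = cinner u (B z)" for u z unfolding A_def by (rule cadj_prop2[OF assms(1)])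
  have aC1: "cinner (C u) z = cinner u (D z)" for u z unfolding D_def by (rule cadj_prop[OF assms(2)])
  have aC2: "cinner (D u) z = cinner u (C z)" for u z unfolding D_def by (rule cadj_prop2[OF assms(2)])
  have P: "onorm (\<lambda>x. A (B x) + C (D x)) \<le> K"
  proof (rule onorm_bound[OF K0])
    fix x
    show "norm (A (B x) + C (D x)) \<le> K * norm x"
    proof (rule comp_bound[OF aB2 aC1 _ K0])
      fix u show "(norm (B u))^2 + (norm (D u))^2 \<le> K * (norm u)^2"
        unfolding K_def by (rule sq_sum_bound[OF sB dB]) auto
    qed
  qed
  have Q: "onorm (\<lambda>x. B (A x) + D (C x)) \<le> K"
  proof (rule onorm_bound[OF K0])
    fix x
    show "norm (B (A x) + D (C x)) \<le> K * norm x"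
    proof (rule comp_bound[OF aB1 aC2 _ K0])
      fix u
      have "norm (A u + C u) \<le> s * norm u" "norm (A u - C u) \<le> d * norm u"
        by (rule adj_sum_bound[OF aB2 aC1 sB dB s0 d0])+
      thus "(norm (A u))^2 + (norm (C u))^2 \<le> K * (norm u)^2"
        unfolding K_def by (intro sq_sum_bound) auto
    qed
  qed
  have Tz: "dsinner (T (x, y)) (x, y) = cinner (B y) x + cinner (C x) y" for x y
    by (simp add: T_def opmat_def dsinner_def)
  define Sset where "Sset = {cmod (dsinner (T z) z) | z. norm z \<le> 1}"
  have NS: "N = Sup Sset" by (simp add: N_def nrad2_def Sset_def)
  have bdd: "bdd_above Sset"
  proof (rule bdd_aboveI[where M="onorm B + onorm C"])
    fix r assume "r \<in> Sset"
    then obtain x y where xy: "norm (x, y) \<le> 1" and r: "r = cmod (cinner (B y) x + cinner (C x) y)"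
      unfolding Sset_def by (auto simp: Tz)
    have nx: "norm x \<le> 1" and ny: "norm y \<le> 1" using xy norm_fst_le[of x y] norm_snd_le[of y x] by auto
    have "r \<le> cmod (cinner (B y) x) + cmod (cinner (C x) y)" unfolding r by (rule norm_triangle_ineq)
    also have "\<dots> \<le> norm (B y) * norm x + norm (C x) * norm y" by (intro add_mono cinner_le)
    also have "\<dots> \<le> onorm B + onorm C"
    proof (intro add_mono)
      have "norm (B y) \<le> onorm B * norm y" by (rule onorm[OF blB])
      also have "\<dots> \<le> onorm B" using ny onorm_pos_le[OF blB] by (simp add: mult_left_le)
      finally show "norm (B y) * norm x \<le> onorm B" using mult_left_le[OF nx norm_ge_zero[of "B y"]] by linarith
      have "norm (C x) \<le> onorm C * norm x" by (rule onorm[OF blC])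
      also have "\<dots> \<le> onorm C" using nx onorm_pos_le[OF blC] by (simp add: mult_left_le)
      finally show "norm (C x) * norm y \<le> onorm C" using mult_left_le[OF ny norm_ge_zero[of "C x"]] by linarith
    qed
    finally show "r \<le> onorm B + onorm C" .
  qed
  have inS: "cmod (dsinner (T z) z) \<le> N" if "norm z \<le> 1" for z
    unfolding NS by (rule cSup_upper[OF _ bdd]) (use that Sset_def in blast)
  have N0: "0 \<le> N" using inS[of 0] by (simp add: Tz[of 0 0, simplified] zero_prod_def)
  have quad: "cmod (cinner (B y) x + cinner (C x) y) \<le> N * ((norm x)^2 + (norm y)^2)" for x y
  proof (cases "(norm x)^2 + (norm y)^2 = 0")
    case True thus ?thesis by simp
  next
    case False
    define r where "r = sqrt ((norm x)^2 + (norm y)^2)"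
    have "0 \<le> (norm x)^2 + (norm y)^2" by simp
    hence pos: "0 < (norm x)^2 + (norm y)^2" using False by linarith
    have r0: "r > 0" unfolding r_def using pos by simp
    have r2: "r^2 = (norm x)^2 + (norm y)^2" by (simp add: r_def)
    define z where "z = ((1/r) *\<^sub>R x, (1/r) *\<^sub>R y)"
    have "norm z = sqrt ((norm x)^2 / r^2 + (norm y)^2 / r^2)"
      using r0 by (simp add: z_def norm_Pair power_divide)
    also have "\<dots> = sqrt (r^2 / r^2)" using r2 by (simp add: add_divide_distrib[symmetric])
    also have "\<dots> = 1" using r0 by simp
    finally have "norm z \<le> 1" by simp
    hence "cmod (dsinner (T z) z) \<le> N" by (rule inS)
    moreover have "dsinner (T z) z = of_real (1/r^2) * (cinner (B y) x + cinner (C x) y)"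
      by (simp add: z_def Tz b.scaleR c.scaleR cinner_scaleR_left cinner_scaleR_right
          power2_eq_square algebra_simps)
    ultimately have "cmod (cinner (B y) x + cinner (C x) y) / r^2 \<le> N"
      by (simp add: norm_divide norm_power)
    thus ?thesis using r0 r2 pos by (simp add: divide_le_eq mult.commute)
  qed
  have Ns: "s \<le> 2 * N"
  proof -
    have "norm (B y + D y) \<le> (2 * N) * norm y" for y
    proof (cases "B y + D y = 0")
      case True thus ?thesis using N0 by simp
    next
      case False
      let ?X = "B y + D y"
      define c where "c = norm y / norm ?X"
      define x where "x = c *\<^sub>R ?X"
      have nx: "norm x = norm y" using False by (simp add: x_def c_def)
      have "Re (cinner (B y) x + cinner (C x) y) = Re (cinner ?X x)"
        by (simp add: aC1 cinner_add_left Re_cinner_commute[of x "D y"])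
      also have "\<dots> = c * (norm ?X)^2"
        by (simp add: x_def cinner_scaleR_right Re_cinner_self)
      also have "\<dots> = norm y * norm ?X" using False by (simp add: c_def power2_eq_square)
      finally have "norm y * norm ?X \<le> cmod (cinner (B y) x + cinner (C x) y)"
        by (metis complex_Re_le_cmod)
      also have "\<dots> \<le> N * (2 * (norm y)^2)" using quad[of y x] nx by simp
      finally have "norm y * norm ?X \<le> norm y * (2 * N * norm y)" by (simp add: power2_eq_square algebra_simps)
      moreover have "y \<noteq> 0" using False by auto
      ultimately show ?thesis by (simp add: mult_le_cancel_left)
    qed
    thus ?thesis unfolding s_def by (intro onorm_bound) (use N0 in auto)
  qed
  have Nd: "d \<le> 2 * N"
  proof -
    have "norm (B y - D y) \<le> (2 * N) * norm y" for y
    proof (cases "B y - D y = 0")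
      case True thus ?thesis using N0 by simp
    next
      case False
      let ?X = "B y - D y"
      define c where "c = norm y / norm ?X"
      define x where "x = scaleC (- \<i> * of_real c) ?X"
      have nx: "norm x = norm y" using False by (simp add: x_def c_def norm_scaleC norm_mult norm_divide)
      have "Im (cinner (B y) x + cinner (C x) y) = Im (cinner ?X x)"
        by (simp add: aC1 cinner_diff_left cinner_commute[of x "D y"])
      also have "\<dots> = c * (norm ?X)^2"
        by (simp add: x_def cinner_scaleC_right cinner_self)
      also have "\<dots> = norm y * norm ?X" using False by (simp add: c_def power2_eq_square)
      finally have "norm y * norm ?X \<le> cmod (cinner (B y) x + cinner (C x) y)"
        by (metis abs_Im_le_cmod abs_le_D1)
      also have "\<dots> \<le> N * (2 * (norm y)^2)" using quad[of y x] nx by simp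
      finally have "norm y * norm ?X \<le> norm y * (2 * N * norm y)" by (simp add: power2_eq_square algebra_simps)
      moreover have "y \<noteq> 0" using False by auto
      ultimately show ?thesis by (simp add: mult_le_cancel_left)
    qed
    thus ?thesis unfolding d_def by (intro onorm_bound) (use N0 in auto)
  qed
  have s2: "s^2 \<le> 4 * N^2" using power_mono[OF Ns s0, of 2] by (simp add: power_mult_distrib)
  have d2: "d^2 \<le> 4 * N^2" using power_mono[OF Nd d0, of 2] by (simp add: power_mult_distrib)
  have "1/4 * max (onorm (\<lambda>x. A (B x) + C (D x))) (onorm (\<lambda>x. B (A x) + D (C x)))
     + 1/8 * \<bar>s^2 - d^2\<bar> \<le> N^2"
    using final_arith[OF P[unfolded K_def] Q[unfolded K_def] s2 d2] by simp
  thus ?thesis by (simp add: A_def D_def T_def N_def s_def d_def)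
qed


end
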